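(* Let $X$ be an algebraic variety and $Z\subset X$ a Zariski closed subset. Then for every $s\in\mathcal{S}(X)$, the restriction $s|_Z$ belongs to $\mathcal{S}(Z)$.
   Context: An affine algebraic variety is a topological space with a sheaf of real-valued functions isomorphic as a ringed space (via a "closed embedding" $i$) to an algebraic set $Y\subset\mathbb{R}^n$ (common zero locus of real polynomials) with its Zariski topology and sheaf of regular functions. An algebraic variety is a topological space with a sheaf of real-valued functions admitting a finite open cover by affine algebraic varieties; Zariski open and Zariski closed subsets of algebraic varieties (with the induced structure) are algebraic varieties, and Zariski open/closed subsets of affine ones are affine. For an algebraic set $Y\subset\mathbb{R}^n$, $\mathcal{S}(Y)$ is the space of restrictions to $Y$ of classical Schwartz functions on $\mathbb{R}^n$; for affine $X$, $\mathcal{S}(X)=\{f:f\circ i^{-1}\in\mathcal{S}(i(X))\}$ (independent of $i$). For a general algebraic variety $X$ with a finite affine open cover $X=\bigcup_{i=1}^kX_i$, $\mathcal{S}(X)$ is the set of functions of the form $\sum_{i=1}^k\mathrm{Ext}_{X_i}^X(s_i)$ with $s_i\in\mathcal{S}(X_i)$ and $\mathrm{Ext}$ denoting extension by zero (this is independent of the cover). *)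

theory Defs
  imports "HOL-Analysis.Analysis"
begin

text \<open>R^n is modelled as the functions nat => real vanishing at all indices >= n.\<close>
definition Rn :: "nat \<Rightarrow> (nat \<Rightarrow> real) set" where
  "Rn n = {x. \<forall>i\<ge>n. x i = 0}"

inductive_set polyfun :: "nat \<Rightarrow> ((nat \<Rightarrow> real) \<Rightarrow> real) set" for n :: nat where
  pf_const: "(\<lambda>x. c) \<in> polyfun n"
| pf_coord: "i < n \<Longrightarrow> (\<lambda>x. x i) \<in> polyfun n"
| pf_add: "p \<in> polyfun n \<Longrightarrow> q \<in> polyfun n \<Longrightarrow> (\<lambda>x. p x + q x) \<in> polyfun n"
| pf_mult: "p \<in> polyfun n \<Longrightarrow> q \<in> polyfun n \<Longrightarrow> (\<lambda>x. p x * q x) \<in> polyfun n"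

definition zero_locus :: "nat \<Rightarrow> ((nat \<Rightarrow> real) \<Rightarrow> real) set \<Rightarrow> (nat \<Rightarrow> real) set" where
  "zero_locus n P = {x \<in> Rn n. \<forall>p\<in>P. p x = 0}"

definition algebraic_set :: "nat \<Rightarrow> (nat \<Rightarrow> real) set \<Rightarrow> bool" where
  "algebraic_set n Y \<longleftrightarrow> (\<exists>P. P \<subseteq> polyfun n \<and> Y = zero_locus n P)"

definition zariski :: "nat \<Rightarrow> (nat \<Rightarrow> real) set \<Rightarrow> (nat \<Rightarrow> real) topology" where
  "zariski n Y = topology (\<lambda>U. U \<subseteq> Y \<and> (\<exists>P. P \<subseteq> polyfun n \<and> Y - U = Y \<inter> zero_locus n P))"

definition regular :: "nat \<Rightarrow> (nat \<Rightarrow> real) set \<Rightarrow> (nat \<Rightarrow> real) set \<Rightarrow> ((nat \<Rightarrow> real) \<Rightarrow> real) \<Rightarrow> bool" where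
  "regular n Y U f \<longleftrightarrow> openin (zariski n Y) U \<and>
     (\<forall>x\<in>U. \<exists>V p q. openin (zariski n Y) V \<and> x \<in> V \<and> V \<subseteq> U \<and> p \<in> polyfun n \<and> q \<in> polyfun n \<and>
        (\<forall>y\<in>V. q y \<noteq> 0 \<and> f y = p y / q y))"

definition pd :: "nat \<Rightarrow> ((nat \<Rightarrow> real) \<Rightarrow> real) \<Rightarrow> (nat \<Rightarrow> real) \<Rightarrow> real" where
  "pd i g x = deriv (\<lambda>t. g (x(i := t))) (x i)"

fun diter :: "nat list \<Rightarrow> ((nat \<Rightarrow> real) \<Rightarrow> real) \<Rightarrow> (nat \<Rightarrow> real) \<Rightarrow> real" where
  "diter [] g = g"
| "diter (i # is) g = pd i (diter is g)"

definition smooth_Rn :: "nat \<Rightarrow> ((nat \<Rightarrow> real) \<Rightarrow> real) \<Rightarrow> bool" where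
  "smooth_Rn n g \<longleftrightarrow> (\<forall>is. set is \<subseteq> {..<n} \<longrightarrow>
      continuous_on (Rn n) (diter is g) \<and>
      (\<forall>i<n. \<forall>x\<in>Rn n. (\<lambda>t. diter is g (x(i := t))) field_differentiable (at (x i))))"

definition schwartz_Rn :: "nat \<Rightarrow> ((nat \<Rightarrow> real) \<Rightarrow> real) \<Rightarrow> bool" where
  "schwartz_Rn n g \<longleftrightarrow> smooth_Rn n g \<and>
     (\<forall>is js. set is \<subseteq> {..<n} \<longrightarrow> set js \<subseteq> {..<n} \<longrightarrow>
        (\<exists>C. \<forall>x\<in>Rn n. \<bar>prod_list (map x js) * diter is g x\<bar> \<le> C))"

text \<open>F U f means: f (through its values on U) is a section of the sheaf over the open set U.\<close>
definition sheaf_of_functions :: "'a topology \<Rightarrow> ('a set \<Rightarrow> ('a \<Rightarrow> real) \<Rightarrow> bool) \<Rightarrow> bool" where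
  "sheaf_of_functions T F \<longleftrightarrow>
     (\<forall>U f. F U f \<longrightarrow> openin T U) \<and>
     (\<forall>U f g. openin T U \<longrightarrow> (\<forall>x\<in>U. f x = g x) \<longrightarrow> F U f = F U g) \<and>
     (\<forall>U V f. openin T V \<longrightarrow> V \<subseteq> U \<longrightarrow> F U f \<longrightarrow> F V f) \<and>
     (\<forall>U f. openin T U \<longrightarrow> (\<forall>x\<in>U. \<exists>V. openin T V \<and> x \<in> V \<and> V \<subseteq> U \<and> F V f) \<longrightarrow> F U f)"

definition ringed_iso :: "'a topology \<Rightarrow> ('a set \<Rightarrow> ('a \<Rightarrow> real) \<Rightarrow> bool) \<Rightarrow>
    'b topology \<Rightarrow> ('b set \<Rightarrow> ('b \<Rightarrow> real) \<Rightarrow> bool) \<Rightarrow> ('a \<Rightarrow> 'b) \<Rightarrow> ('b \<Rightarrow> 'a) \<Rightarrow> bool" where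
  "ringed_iso T1 F1 T2 F2 \<phi> \<psi> \<longleftrightarrow> homeomorphic_maps T1 T2 \<phi> \<psi> \<and>
     (\<forall>V g. openin T2 V \<longrightarrow> (F2 V g \<longleftrightarrow> F1 (topspace T1 \<inter> \<phi> -` V) (g \<circ> \<phi>)))"

definition affine_variety :: "'a topology \<Rightarrow> ('a set \<Rightarrow> ('a \<Rightarrow> real) \<Rightarrow> bool) \<Rightarrow> bool" where
  "affine_variety T F \<longleftrightarrow> sheaf_of_functions T F \<and>
     (\<exists>n Y \<phi> \<psi>. algebraic_set n Y \<and> ringed_iso T F (zariski n Y) (regular n Y) \<phi> \<psi>)"

definition open_restrict :: "('a set \<Rightarrow> ('a \<Rightarrow> real) \<Rightarrow> bool) \<Rightarrow> 'a set \<Rightarrow> ('a set \<Rightarrow> ('a \<Rightarrow> real) \<Rightarrow> bool)" where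
  "open_restrict F U = (\<lambda>W f. W \<subseteq> U \<and> F W f)"

definition affine_open :: "'a topology \<Rightarrow> ('a set \<Rightarrow> ('a \<Rightarrow> real) \<Rightarrow> bool) \<Rightarrow> 'a set \<Rightarrow> bool" where
  "affine_open T F U \<longleftrightarrow> openin T U \<and> affine_variety (subtopology T U) (open_restrict F U)"

definition algebraic_variety :: "'a topology \<Rightarrow> ('a set \<Rightarrow> ('a \<Rightarrow> real) \<Rightarrow> bool) \<Rightarrow> bool" where
  "algebraic_variety T F \<longleftrightarrow> sheaf_of_functions T F \<and>
     (\<exists>(I::nat set) X. finite I \<and> (\<forall>k\<in>I. affine_open T F (X k)) \<and> (\<Union>k\<in>I. X k) = topspace T)"

definition induced_sheaf :: "'a topology \<Rightarrow> ('a set \<Rightarrow> ('a \<Rightarrow> real) \<Rightarrow> bool) \<Rightarrow> 'a set \<Rightarrow> ('a set \<Rightarrow> ('a \<Rightarrow> real) \<Rightarrow> bool)" where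
  "induced_sheaf T F Z = (\<lambda>W f. openin (subtopology T Z) W \<and>
     (\<forall>x\<in>W. \<exists>V g. openin T V \<and> x \<in> V \<and> F V g \<and> (\<forall>y\<in>V \<inter> W. f y = g y)))"

text \<open>Schwartz functions on an affine variety: composites with a closed embedding of restrictions
  of classical Schwartz functions (values only matter on the topspace).\<close>
definition schwartz_affine :: "'a topology \<Rightarrow> ('a set \<Rightarrow> ('a \<Rightarrow> real) \<Rightarrow> bool) \<Rightarrow> ('a \<Rightarrow> real) \<Rightarrow> bool" where
  "schwartz_affine T F f \<longleftrightarrow> (\<exists>n Y \<phi> \<psi>. algebraic_set n Y \<and> ringed_iso T F (zariski n Y) (regular n Y) \<phi> \<psi> \<and>
      (\<exists>g. schwartz_Rn n g \<and> (\<forall>x\<in>topspace T. f x = g (\<phi> x))))"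

definition ext0 :: "'a set \<Rightarrow> ('a \<Rightarrow> real) \<Rightarrow> 'a \<Rightarrow> real" where
  "ext0 U s = (\<lambda>x. if x \<in> U then s x else 0)"

text \<open>S(X): sums of extensions by zero of Schwartz functions on the members of a finite affine open cover.
  Functions in S(X) are represented as functions vanishing outside the topspace.\<close>
definition schwartz :: "'a topology \<Rightarrow> ('a set \<Rightarrow> ('a \<Rightarrow> real) \<Rightarrow> bool) \<Rightarrow> ('a \<Rightarrow> real) set" where
  "schwartz T F = {f. \<exists>(I::nat set) X s. finite I \<and> (\<forall>k\<in>I. affine_open T F (X k)) \<and> (\<Union>k\<in>I. X k) = topspace T \<and>
      (\<forall>k\<in>I. schwartz_affine (subtopology T (X k)) (open_restrict F (X k)) (s k)) \<and>
      f = (\<lambda>x. \<Sum>k\<in>I. ext0 (X k) (s k) x)}"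

end

theory Submission
  imports Defs
begin

lemma zl_union: "zero_locus n (P \<union> Q) = zero_locus n P \<inter> zero_locus n Q"
  by (auto simp: zero_locus_def)

lemma zl_prod:
  "zero_locus n P \<union> zero_locus n Q = zero_locus n {(\<lambda>x. p x * q x) | p q. p \<in> P \<and> q \<in> Q}"
  by (auto simp: zero_locus_def) (metis mult_eq_0_iff)

lemma istop_zariski:
  assumes "Y \<subseteq> Rn n"
  shows "istopology (\<lambda>U. U \<subseteq> Y \<and> (\<exists>P. P \<subseteq> polyfun n \<and> Y - U = Y \<inter> zero_locus n P))"
  unfolding istopology_def
proof (rule conjI; (intro allI impI)?)
  fix S T assume S: "S \<subseteq> Y \<and> (\<exists>P. P \<subseteq> polyfun n \<and> Y - S = Y \<inter> zero_locus n P)"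
    and T: "T \<subseteq> Y \<and> (\<exists>P. P \<subseteq> polyfun n \<and> Y - T = Y \<inter> zero_locus n P)"
  then obtain P Q where P: "P \<subseteq> polyfun n" "Y - S = Y \<inter> zero_locus n P"
    and Q: "Q \<subseteq> polyfun n" "Y - T = Y \<inter> zero_locus n Q" by blast
  have "{(\<lambda>x. p x * q x) | p q. p \<in> P \<and> q \<in> Q} \<subseteq> polyfun n"
    using P Q by (auto intro: polyfun.pf_mult)
  moreover have "Y - (S \<inter> T) = Y \<inter> zero_locus n {(\<lambda>x. p x * q x) | p q. p \<in> P \<and> q \<in> Q}"
    using P Q zl_prod[of n P Q] by blast
  ultimately show "S \<inter> T \<subseteq> Y \<and> (\<exists>P. P \<subseteq> polyfun n \<and> Y - (S \<inter> T) = Y \<inter> zero_locus n P)"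
    using S by blast
next
  fix K assume K: "Ball K (\<lambda>U. U \<subseteq> Y \<and> (\<exists>P. P \<subseteq> polyfun n \<and> Y - U = Y \<inter> zero_locus n P))"
  then obtain PP where PP: "\<And>U. U \<in> K \<Longrightarrow> PP U \<subseteq> polyfun n \<and> Y - U = Y \<inter> zero_locus n (PP U)"
    by metis
  have "Y - \<Union>K = Y \<inter> zero_locus n (\<Union>U\<in>K. PP U)"
  proof
    show "Y - \<Union>K \<subseteq> Y \<inter> zero_locus n (\<Union>U\<in>K. PP U)"
    proof
      fix x assume x: "x \<in> Y - \<Union>K"
      have "\<forall>U\<in>K. x \<in> zero_locus n (PP U)" using PP x by blast
      then show "x \<in> Y \<inter> zero_locus n (\<Union>U\<in>K. PP U)" using x assms by (auto simp: zero_locus_def)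
    qed
  next
    show "Y \<inter> zero_locus n (\<Union>U\<in>K. PP U) \<subseteq> Y - \<Union>K"
    proof
      fix x assume x: "x \<in> Y \<inter> zero_locus n (\<Union>U\<in>K. PP U)"
      have "\<forall>U\<in>K. x \<in> zero_locus n (PP U)" using x by (auto simp: zero_locus_def)
      then show "x \<in> Y - \<Union>K" using x PP by blast
    qed
  qed
  moreover have "(\<Union>U\<in>K. PP U) \<subseteq> polyfun n" using PP by blast
  ultimately show "\<Union>K \<subseteq> Y \<and> (\<exists>P. P \<subseteq> polyfun n \<and> Y - \<Union>K = Y \<inter> zero_locus n P)"
    using K by blast
qed

lemma openin_zariski:
  assumes "Y \<subseteq> Rn n"
  shows "openin (zariski n Y) U \<longleftrightarrow> U \<subseteq> Y \<and> (\<exists>P. P \<subseteq> polyfun n \<and> Y - U = Y \<inter> zero_locus n P)"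
  unfolding zariski_def using topology_inverse'[OF istop_zariski[OF assms]] by simp

lemma alg_sub: "algebraic_set n Y \<Longrightarrow> Y \<subseteq> Rn n"
  by (auto simp: algebraic_set_def zero_locus_def)

lemma topspace_zariski:
  assumes "Y \<subseteq> Rn n"
  shows "topspace (zariski n Y) = Y"
proof -
  have "zero_locus n {\<lambda>x. 1} = {}" by (auto simp: zero_locus_def)
  then have "openin (zariski n Y) Y" using openin_zariski[OF assms]
    by (metis Diff_cancel Int_empty_right empty_subsetI insert_subset polyfun.pf_const subset_refl)
  then show ?thesis using openin_subset[of "zariski n Y"] openin_zariski[OF assms]
    by (metis openin_topspace subset_antisym)
qed

lemma zariski_sub:
  assumes "Y \<subseteq> Rn n" "Y' \<subseteq> Y"
  shows "zariski n Y' = subtopology (zariski n Y) Y'"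
proof (rule topology_eq[THEN iffD2], intro allI)
  fix U
  have Y': "Y' \<subseteq> Rn n" using assms by blast
  show "openin (zariski n Y') U = openin (subtopology (zariski n Y) Y') U"
    unfolding openin_subtopology openin_zariski[OF Y'] openin_zariski[OF assms(1)]
  proof safe
    fix P assume U: "U \<subseteq> Y'" and P: "P \<subseteq> polyfun n" "Y' - U = Y' \<inter> zero_locus n P"
    show "\<exists>T. (T \<subseteq> Y \<and> (\<exists>P. P \<subseteq> polyfun n \<and> Y - T = Y \<inter> zero_locus n P)) \<and> U = T \<inter> Y'"
      by (rule exI[of _ "Y - Y \<inter> zero_locus n P"]) (use U P assms in blast)
  next
    fix T P assume "T \<subseteq> Y" "P \<subseteq> polyfun n" "Y - T = Y \<inter> zero_locus n P"
    then show "\<exists>Pa. Pa \<subseteq> polyfun n \<and> Y' - T \<inter> Y' = Y' \<inter> zero_locus n Pa"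
      using assms by (intro exI[of _ P]) blast
  qed
qed


lemma openin_sub_iff:
  assumes "openin T A" "W \<subseteq> A \<inter> Z"
  shows "openin (subtopology T (A \<inter> Z)) W \<longleftrightarrow> openin (subtopology T Z) W"
proof
  assume "openin (subtopology T (A \<inter> Z)) W"
  then obtain Ob where "openin T Ob" "W = Ob \<inter> (A \<inter> Z)" by (auto simp: openin_subtopology)
  then show "openin (subtopology T Z) W" using assms(1)
    by (auto simp: openin_subtopology intro!: exI[of _ "Ob \<inter> A"])
next
  assume "openin (subtopology T Z) W"
  then obtain Ob where "openin T Ob" "W = Ob \<inter> Z" by (auto simp: openin_subtopology)
  then show "openin (subtopology T (A \<inter> Z)) W" using assms(2)
    by (auto simp: openin_subtopology intro!: exI[of _ Ob])
qed

lemma sheafD1: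
  assumes "sheaf_of_functions T F" "F U f" shows "openin T U"
proof -
  have "\<forall>U f. F U f \<longrightarrow> openin T U" using assms(1) unfolding sheaf_of_functions_def by (rule conjunct1)
  then show ?thesis using assms(2) by blast
qed

lemma sheafD2:
  assumes "sheaf_of_functions T F" "openin T U" "\<forall>x\<in>U. f x = g x" shows "F U f = F U g"
proof -
  have "\<forall>U f g. openin T U \<longrightarrow> (\<forall>x\<in>U. f x = g x) \<longrightarrow> F U f = F U g"
    using assms(1) unfolding sheaf_of_functions_def by (rule conjunct1[OF conjunct2])
  then show ?thesis using assms(2,3) by blast
qed

lemma sheafD3:
  assumes "sheaf_of_functions T F" "openin T V" "V \<subseteq> U" "F U f" shows "F V f"
proof -
  have "\<forall>U V f. openin T V \<longrightarrow> V \<subseteq> U \<longrightarrow> F U f \<longrightarrow> F V f"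
    using assms(1) unfolding sheaf_of_functions_def by (rule conjunct1[OF conjunct2[OF conjunct2]])
  then show ?thesis using assms(2,3,4) by blast
qed

lemma sheaf_ind:
  assumes shF: "sheaf_of_functions T F" and A: "openin T A" and Zc: "closedin T Z"
  shows "sheaf_of_functions (subtopology T (A \<inter> Z)) (open_restrict (induced_sheaf T F Z) (A \<inter> Z))"
proof -
  note F3 = sheafD3[OF shF]
  let ?G = "open_restrict (induced_sheaf T F Z) (A \<inter> Z)"
  show ?thesis unfolding sheaf_of_functions_def
  proof (intro conjI allI impI)
    fix U f assume "?G U f"
    then show "openin (subtopology T (A \<inter> Z)) U"
      using openin_sub_iff[OF A] by (auto simp: open_restrict_def induced_sheaf_def)
  next
    fix U and f g :: "'a \<Rightarrow> real" assume "openin (subtopology T (A \<inter> Z)) U" "\<forall>x\<in>U. f x = g x"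
    then have "\<And>V h. (\<forall>y\<in>V \<inter> U. f y = h y) = (\<forall>y\<in>V \<inter> U. g y = h y)"
      by auto
    then show "?G U f = ?G U g"
      unfolding open_restrict_def induced_sheaf_def by presburger
  next
    fix U V f assume V: "openin (subtopology T (A \<inter> Z)) V" "V \<subseteq> U" "?G U f"
    have VB: "V \<subseteq> A \<inter> Z" using V(1) openin_subset by fastforce
    show "?G V f" unfolding open_restrict_def induced_sheaf_def
    proof (intro conjI ballI)
      show "V \<subseteq> A \<inter> Z" by fact
      show "openin (subtopology T Z) V" using openin_sub_iff[OF A VB] V(1) by blast
      fix x assume "x \<in> V"
      then obtain V' g where "openin T V'" "x \<in> V'" "F V' g" "\<forall>y\<in>V' \<inter> U. f y = g y"
        using V unfolding open_restrict_def induced_sheaf_def by blast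
      then show "\<exists>V' g. openin T V' \<and> x \<in> V' \<and> F V' g \<and> (\<forall>y\<in>V' \<inter> V. f y = g y)"
        using V(2) by blast
    qed
  next
    fix U f assume U: "openin (subtopology T (A \<inter> Z)) U"
      and loc: "\<forall>x\<in>U. \<exists>V. openin (subtopology T (A \<inter> Z)) V \<and> x \<in> V \<and> V \<subseteq> U \<and> ?G V f"
    have UB: "U \<subseteq> A \<inter> Z" using U openin_subset by fastforce
    show "?G U f" unfolding open_restrict_def induced_sheaf_def
    proof (intro conjI ballI)
      show "U \<subseteq> A \<inter> Z" by fact
      show "openin (subtopology T Z) U" using openin_sub_iff[OF A UB] U by blast
      fix x assume "x \<in> U"
      then obtain V where V: "openin (subtopology T (A \<inter> Z)) V" "x \<in> V" "V \<subseteq> U" "?G V f"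
        using loc by blast
      then obtain V' g where V': "openin T V'" "x \<in> V'" "F V' g" "\<forall>y\<in>V' \<inter> V. f y = g y"
        unfolding open_restrict_def induced_sheaf_def by blast
      from V(1) obtain Ob where Ob: "openin T Ob" "V = Ob \<inter> (A \<inter> Z)" by (auto simp: openin_subtopology)
      have "openin T (V' \<inter> Ob)" using V' Ob by blast
      moreover have "F (V' \<inter> Ob) g" using F3[OF \<open>openin T (V' \<inter> Ob)\<close> _ V'(3)] by blast
      moreover have "x \<in> V' \<inter> Ob" using V' V Ob by blast
      moreover have "\<forall>y\<in>(V' \<inter> Ob) \<inter> U. f y = g y" using V' Ob UB by blast
      ultimately show "\<exists>V' g. openin T V' \<and> x \<in> V' \<and> F V' g \<and> (\<forall>y\<in>V' \<inter> U. f y = g y)"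
        by blast
    qed
  qed
qed


lemma core:
  assumes shF: "sheaf_of_functions T F" and A: "openin T A" and Zc: "closedin T Z"
    and alg: "algebraic_set n Y"
    and iso: "ringed_iso (subtopology T A) (open_restrict F A) (zariski n Y) (regular n Y) \<phi> \<psi>"
  shows "\<exists>Y'. algebraic_set n Y' \<and>
    ringed_iso (subtopology T (A \<inter> Z)) (open_restrict (induced_sheaf T F Z) (A \<inter> Z)) (zariski n Y') (regular n Y') \<phi> \<psi>"
proof -
  let ?TA = "subtopology T A"
  let ?B = "A \<inter> Z"
  have YR: "Y \<subseteq> Rn n" using alg by (rule alg_sub)
  have hom: "homeomorphic_maps ?TA (zariski n Y) \<phi> \<psi>" using iso by (simp add: ringed_iso_def)
  have tsA: "topspace ?TA = A" using A openin_subset by fastforce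
  have tsY: "topspace (zariski n Y) = Y" by (rule topspace_zariski[OF YR])
  have Zsub: "Z \<subseteq> topspace T" using Zc closedin_subset by blast
  have phiY: "\<And>x. x \<in> A \<Longrightarrow> \<phi> x \<in> Y" and psiA: "\<And>y. y \<in> Y \<Longrightarrow> \<psi> y \<in> A"
    and psiphi: "\<And>x. x \<in> A \<Longrightarrow> \<psi> (\<phi> x) = x" and phipsi: "\<And>y. y \<in> Y \<Longrightarrow> \<phi> (\<psi> y) = y"
    using hom tsA tsY unfolding homeomorphic_maps_def continuous_map_def by auto
  have isoF: "\<And>V g. openin (zariski n Y) V \<Longrightarrow>
      regular n Y V g \<longleftrightarrow> (A \<inter> \<phi> -` V \<subseteq> A \<and> F (A \<inter> \<phi> -` V) (g \<circ> \<phi>))"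
    using iso tsA unfolding ringed_iso_def open_restrict_def by auto
  have hm: "homeomorphic_map ?TA (zariski n Y) \<phi>" using hom homeomorphic_maps_map by blast
  have cB: "closedin ?TA (A \<inter> Z)" by (rule closedin_subtopology_Int_closed[OF Zc])
  then have cY': "closedin (zariski n Y) (\<phi> ` ?B)"
    using homeomorphic_map_closedness[OF hm] tsA by blast
  define Y' where "Y' = \<phi> ` ?B"
  have Y'Y: "Y' \<subseteq> Y" using phiY Y'_def by auto
  obtain P where P: "P \<subseteq> polyfun n" "Y - (Y - Y') = Y \<inter> zero_locus n P"
    using cY' unfolding closedin_def tsY Y'_def[symmetric] openin_zariski[OF YR] by blast
  obtain P0 where P0: "P0 \<subseteq> polyfun n" "Y = zero_locus n P0" using alg algebraic_set_def by blast
  have "Y' = zero_locus n (P0 \<union> P)" using P P0(2) Y'Y zl_union by blast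
  then have algY': "algebraic_set n Y'" using P P0 unfolding algebraic_set_def by blast
  have Y'R: "Y' \<subseteq> Rn n" using Y'Y YR by blast
  have zY': "zariski n Y' = subtopology (zariski n Y) Y'" by (rule zariski_sub[OF YR Y'Y])
  have TB: "subtopology T ?B = subtopology ?TA ?B" by (simp add: subtopology_subtopology)
  have homB: "homeomorphic_maps (subtopology T ?B) (zariski n Y') \<phi> \<psi>"
    unfolding TB zY' by (rule homeomorphic_maps_subtopologies[OF hom]) (use tsA tsY Y'Y Y'_def in auto)
  have tsB: "topspace (subtopology T ?B) = ?B" using Zsub by auto
  have psiB: "\<And>y. y \<in> Y' \<Longrightarrow> \<psi> y \<in> ?B" using Y'_def psiphi by auto
  have phiY': "\<And>x. x \<in> ?B \<Longrightarrow> \<phi> x \<in> Y'" using Y'_def by auto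
  have "ringed_iso (subtopology T ?B) (open_restrict (induced_sheaf T F Z) ?B) (zariski n Y') (regular n Y') \<phi> \<psi>"
    unfolding ringed_iso_def
  proof (intro conjI homB allI impI)
    fix V and g :: "_ \<Rightarrow> real"
    assume Vo: "openin (zariski n Y') V"
    have VY': "V \<subseteq> Y'" using Vo openin_zariski[OF Y'R] by blast
    define W where "W = ?B \<inter> \<phi> -` V"
    have W: "topspace (subtopology T ?B) \<inter> \<phi> -` V = W" using tsB W_def by simp
    obtain U where U: "openin (zariski n Y) U" "V = U \<inter> Y'" using Vo zY' openin_subtopology by metis
    show "regular n Y' V g = open_restrict (induced_sheaf T F Z) ?B (topspace (subtopology T ?B) \<inter> \<phi> -` V) (g \<circ> \<phi>)"
      unfolding W
    proof
      assume reg: "regular n Y' V g"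
      have WB: "W \<subseteq> ?B" using W_def by blast
      have eqW: "{x \<in> topspace (subtopology T ?B). \<phi> x \<in> V} = W" using tsB W_def by auto
      have "openin (subtopology T ?B) W"
        using openin_continuous_map_preimage[OF _ Vo, of "subtopology T ?B" \<phi>] homB
        unfolding homeomorphic_maps_def eqW by blast
      then have Wo: "openin (subtopology T Z) W" using openin_sub_iff[OF A WB] by blast
      show "open_restrict (induced_sheaf T F Z) ?B W (g \<circ> \<phi>)"
        unfolding open_restrict_def induced_sheaf_def
      proof (intro conjI WB Wo ballI)
        fix x assume xW: "x \<in> W"
        then have yV: "\<phi> x \<in> V" using W_def by blast
        obtain V2 p q where V2: "openin (zariski n Y') V2" "\<phi> x \<in> V2" "V2 \<subseteq> V"
          "p \<in> polyfun n" "q \<in> polyfun n" "\<forall>y\<in>V2. q y \<noteq> 0 \<and> g y = p y / q y"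
          using reg yV unfolding regular_def by blast
        obtain V3 where V3: "openin (zariski n Y) V3" "V2 = V3 \<inter> Y'"
          using V2(1) zY' openin_subtopology by metis
        define Nq where "Nq = Y - Y \<inter> zero_locus n {q}"
        have "openin (zariski n Y) Nq" unfolding openin_zariski[OF YR] Nq_def
          using V2(5) by (intro conjI exI[of _ "{q}"]) auto
        define V4 where "V4 = V3 \<inter> Nq"
        have V4o: "openin (zariski n Y) V4" using V4_def V3(1) \<open>openin (zariski n Y) Nq\<close> by blast
        have qnz: "\<And>z. z \<in> V4 \<Longrightarrow> q z \<noteq> 0"
          using YR unfolding V4_def Nq_def zero_locus_def by blast
        have xV4: "\<phi> x \<in> V4"
          using V2(2,6) V3(2) phiY W_def xW unfolding V4_def Nq_def zero_locus_def by auto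
        have "regular n Y V4 (\<lambda>z. p z / q z)"
          unfolding regular_def
          using V4o qnz V2(4,5) by blast
        then have FV0: "F (A \<inter> \<phi> -` V4) ((\<lambda>z. p z / q z) \<circ> \<phi>)" using isoF[OF V4o] by blast
        have eq4: "{x \<in> topspace ?TA. \<phi> x \<in> V4} = A \<inter> \<phi> -` V4" using tsA by auto
        have "openin ?TA (A \<inter> \<phi> -` V4)"
          using openin_continuous_map_preimage[OF _ V4o, of ?TA \<phi>] hom
          unfolding homeomorphic_maps_def eq4 by blast
        then have V0o: "openin T (A \<inter> \<phi> -` V4)" using openin_trans_full[OF _ A] by blast
        have "x \<in> A \<inter> \<phi> -` V4" using xV4 xW W_def by blast
        moreover have "\<forall>y\<in>(A \<inter> \<phi> -` V4) \<inter> W. (g \<circ> \<phi>) y = ((\<lambda>z. p z / q z) \<circ> \<phi>) y"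
        proof
          fix y assume y: "y \<in> (A \<inter> \<phi> -` V4) \<inter> W"
          then have "\<phi> y \<in> V2" using V3(2) V4_def phiY' W_def by blast
          then show "(g \<circ> \<phi>) y = ((\<lambda>z. p z / q z) \<circ> \<phi>) y" using V2(6) by simp
        qed
        ultimately show "\<exists>V0 g0. openin T V0 \<and> x \<in> V0 \<and> F V0 g0 \<and> (\<forall>y\<in>V0 \<inter> W. (g \<circ> \<phi>) y = g0 y)"
          using V0o FV0 by blast
      qed
    next
      assume G: "open_restrict (induced_sheaf T F Z) ?B W (g \<circ> \<phi>)"
      show "regular n Y' V g" unfolding regular_def
      proof (intro conjI Vo ballI)
        fix y assume yV: "y \<in> V"
        then have yY': "y \<in> Y'" using VY' by blast
        have xW: "\<psi> y \<in> W" using psiB[OF yY'] phipsi yY' Y'Y yV W_def by auto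
        obtain V0 g0 where V0: "openin T V0" "\<psi> y \<in> V0" "F V0 g0" "\<forall>z\<in>V0 \<inter> W. (g \<circ> \<phi>) z = g0 z"
          using G xW unfolding open_restrict_def induced_sheaf_def by blast
        define V0' where "V0' = V0 \<inter> A"
        have V0'o: "openin T V0'" using V0(1) A V0'_def by blast
        have FV0': "F V0' g0" using sheafD3[OF shF V0'o _ V0(3)] V0'_def by blast
        have "openin ?TA V0'" unfolding openin_subtopology using V0(1) V0'_def by blast
        then have Oo: "openin (zariski n Y) (\<phi> ` V0')"
          using homeomorphic_map_openness[OF hm] tsA V0'_def by blast
        have pre: "A \<inter> \<phi> -` (\<phi> ` V0') = V0'"
          using psiphi V0'_def by auto (metis IntD2 IntI)
        have "F V0' ((g0 \<circ> \<psi>) \<circ> \<phi>)"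
          using FV0' sheafD2[OF shF V0'o, of "(g0 \<circ> \<psi>) \<circ> \<phi>" g0] psiphi V0'_def by auto
        then have reg0: "regular n Y (\<phi> ` V0') (g0 \<circ> \<psi>)" using isoF[OF Oo] pre V0'_def by auto
        have yin: "y \<in> \<phi> ` V0'"
          using V0(2) psiB[OF yY'] phipsi yY' Y'Y V0'_def by (metis IntD1 IntI image_eqI subsetD)
        have "\<forall>x\<in>\<phi> ` V0'. \<exists>V p q. openin (zariski n Y) V \<and> x \<in> V \<and> V \<subseteq> \<phi> ` V0' \<and> p \<in> polyfun n \<and> q \<in> polyfun n \<and>
            (\<forall>y\<in>V. q y \<noteq> 0 \<and> (g0 \<circ> \<psi>) y = p y / q y)"
          using reg0 unfolding regular_def by (rule conjunct2)
        from bspec[OF this yin] obtain V1 p q where V1: "openin (zariski n Y) V1" "y \<in> V1" "V1 \<subseteq> \<phi> ` V0'"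
          "p \<in> polyfun n" "q \<in> polyfun n" "\<forall>z\<in>V1. q z \<noteq> 0 \<and> (g0 \<circ> \<psi>) z = p z / q z"
          by (elim exE conjE) blast
        define V2 where "V2 = V1 \<inter> V"
        have "V2 = (V1 \<inter> U) \<inter> Y'" using V2_def U(2) by blast
        moreover have "openin (zariski n Y) (V1 \<inter> U)" using V1(1) U(1) by blast
        ultimately have V2o: "openin (zariski n Y') V2" unfolding zY' openin_subtopology by blast
        have gz: "\<forall>z\<in>V2. q z \<noteq> 0 \<and> g z = p z / q z"
        proof
          fix z assume z: "z \<in> V2"
          then have zY': "z \<in> Y'" using V2_def VY' by blast
          have pz: "\<psi> z \<in> W" using psiB[OF zY'] phipsi zY' Y'Y z V2_def W_def by auto
          obtain v where v: "v \<in> V0'" "z = \<phi> v" using z V2_def V1(3) by blast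
          have "\<psi> z = v" using v psiphi V0'_def by auto
          then have "\<psi> z \<in> V0" using v V0'_def by blast
          then have "g (\<phi> (\<psi> z)) = g0 (\<psi> z)" using V0(4) pz by auto
          then have "g z = g0 (\<psi> z)" using phipsi zY' Y'Y by auto
          then show "q z \<noteq> 0 \<and> g z = p z / q z" using V1(6) z V2_def by auto
        qed
        have yV2: "y \<in> V2" "V2 \<subseteq> V" using V1(2) yV V2_def by auto
        show "\<exists>V' p q. openin (zariski n Y') V' \<and> y \<in> V' \<and> V' \<subseteq> V \<and> p \<in> polyfun n \<and> q \<in> polyfun n \<and> (\<forall>y\<in>V'. q y \<noteq> 0 \<and> g y = p y / q y)"
          using V2o V1(4,5) yV2 gz by (intro exI[of _ V2] exI[of _ p] exI[of _ q]) simp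
      qed
    qed
  qed
  then show ?thesis using algY' by blast
qed


lemma piece:
  assumes shF: "sheaf_of_functions T F" and Zc: "closedin T Z"
    and aff: "affine_open T F A"
    and sch: "schwartz_affine (subtopology T A) (open_restrict F A) sk"
  shows "affine_open (subtopology T Z) (induced_sheaf T F Z) (A \<inter> Z)
    \<and> schwartz_affine (subtopology (subtopology T Z) (A \<inter> Z)) (open_restrict (induced_sheaf T F Z) (A \<inter> Z)) sk"
proof -
  have A: "openin T A" using aff affine_open_def by blast
  obtain n Y \<phi> \<psi> g where alg: "algebraic_set n Y"
    and iso: "ringed_iso (subtopology T A) (open_restrict F A) (zariski n Y) (regular n Y) \<phi> \<psi>"
    and g: "schwartz_Rn n g" "\<forall>x\<in>topspace (subtopology T A). sk x = g (\<phi> x)"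
    using sch unfolding schwartz_affine_def by blast
  obtain Y' where Y': "algebraic_set n Y'"
    "ringed_iso (subtopology T (A \<inter> Z)) (open_restrict (induced_sheaf T F Z) (A \<inter> Z)) (zariski n Y') (regular n Y') \<phi> \<psi>"
    using core[OF shF A Zc alg iso] by blast
  have ST: "subtopology (subtopology T Z) (A \<inter> Z) = subtopology T (A \<inter> Z)"
    by (simp add: subtopology_subtopology Int_commute Int_left_commute)
  have sh: "sheaf_of_functions (subtopology T (A \<inter> Z)) (open_restrict (induced_sheaf T F Z) (A \<inter> Z))"
    by (rule sheaf_ind[OF shF A Zc])
  have op: "openin (subtopology T Z) (A \<inter> Z)" unfolding openin_subtopology using A by blast
  have "affine_variety (subtopology T (A \<inter> Z)) (open_restrict (induced_sheaf T F Z) (A \<inter> Z))"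
    unfolding affine_variety_def using sh Y' by blast
  then have a1: "affine_open (subtopology T Z) (induced_sheaf T F Z) (A \<inter> Z)"
    unfolding affine_open_def ST using op by blast
  have "\<forall>x\<in>topspace (subtopology T (A \<inter> Z)). sk x = g (\<phi> x)" using g(2) by auto
  then have "schwartz_affine (subtopology T (A \<inter> Z)) (open_restrict (induced_sheaf T F Z) (A \<inter> Z)) sk"
    unfolding schwartz_affine_def using Y' g(1) by blast
  then show ?thesis using a1 ST by simp
qed

theorem proposition5p3:
  fixes T :: "'a topology" and F :: "'a set \<Rightarrow> ('a \<Rightarrow> real) \<Rightarrow> bool"
    and Z :: "'a set" and s :: "'a \<Rightarrow> real"
  assumes "algebraic_variety T F"
    and "closedin T Z"
    and "s \<in> schwartz T F"
  shows "ext0 Z s \<in> schwartz (subtopology T Z) (induced_sheaf T F Z)"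
proof -
  have shF: "sheaf_of_functions T F" using assms(1) algebraic_variety_def by blast
  obtain I :: "nat set" and X sk where fin: "finite I" and aff: "\<forall>k\<in>I. affine_open T F (X k)"
    and cov: "(\<Union>k\<in>I. X k) = topspace T"
    and sch: "\<forall>k\<in>I. schwartz_affine (subtopology T (X k)) (open_restrict F (X k)) (sk k)"
    and s: "s = (\<lambda>x. \<Sum>k\<in>I. ext0 (X k) (sk k) x)"
    using assms(3) unfolding schwartz_def by blast
  have P: "\<forall>k\<in>I. affine_open (subtopology T Z) (induced_sheaf T F Z) (X k \<inter> Z)
    \<and> schwartz_affine (subtopology (subtopology T Z) (X k \<inter> Z)) (open_restrict (induced_sheaf T F Z) (X k \<inter> Z)) (sk k)"
    using piece[OF shF assms(2)] aff sch by blast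
  have cov': "(\<Union>k\<in>I. X k \<inter> Z) = topspace (subtopology T Z)" using cov by auto
  have eq: "ext0 Z s = (\<lambda>x. \<Sum>k\<in>I. ext0 (X k \<inter> Z) (sk k) x)"
  proof
    fix x show "ext0 Z s x = (\<Sum>k\<in>I. ext0 (X k \<inter> Z) (sk k) x)"
      by (cases "x \<in> Z") (auto simp: ext0_def s intro!: sum.cong)
  qed
  show ?thesis unfolding schwartz_def mem_Collect_eq
    by (intro exI[of _ I] exI[of _ "\<lambda>k. X k \<inter> Z"] exI[of _ sk]) (use fin P cov' eq in blast)
qed

end
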